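(* Let $\Delta$ be a triangle, $v$ a vertex, and $(\xi_m)_{m\ge0}$ the associated sequence of partitions of the angular interval $I$ at $v$. Let $n\ge0$, $c\ge1$ be integers, let $J$ be an interval of the partition $\xi_n$, and let $S$ be the set of cutting points of $\xi_{n+c}$ lying in the interior of $J$. If $|S|\ge 4+2c$, then there exist three points $x_p,x_q,x_r\in S$ which are in good position.
   Context: Let $\Delta$ be a triangle and $v$ a vertex of $\Delta$. Identify the set of directions (rays) emanating from $v$ into $\Delta$ with an interval $I$ via angular coordinate. A generalized diagonal is a billiard orbit segment from a vertex to a vertex; its length is its number of reflections. A direction $x\in I$ whose billiard trajectory from $v$ is a generalized diagonal (reaches a vertex) is assigned an index, namely the length of that generalized diagonal; we write $x_p$ for such a point of index $p$. The partition $\xi_m$ of $I$ is the partition into subintervals whose cutting points are exactly the directions of index at most $m$ (so $\xi_0$ is essentially the trivial partition, and $\xi_{m+1}$ refines $\xi_m$ with at most one new cutting point inside each interval of $\xi_m$). Three cutting points $x_p,x_q,x_r$ with indices $p<q<r$ are in good position if (1) $x_r$ lies strictly between $x_p$ and $x_q$, and (2) the open interval bounded by $x_p$ and $x_q$ contains no cutting point of index $\le r$ other than $x_r$. *)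

theory Defs
  imports "HOL-Analysis.Analysis"
begin

text \<open>Billiards in a triangle with vertices A, B, C (points of the complex plane).
  The distinguished vertex is A. Directions from A into the triangle are parametrised
  by t in [0,1]: direction towards the point (1-t)B + tC of the opposite side.
  This is an order-preserving reparametrisation of the angular coordinate.\<close>

definition refl_dir :: "complex \<Rightarrow> complex \<Rightarrow> complex" where
  "refl_dir e d = (e / cnj e) * cnj d"   \<comment> \<open>reflection of d in the line spanned by e\<close>

definition exit_time :: "complex \<Rightarrow> complex \<Rightarrow> complex \<Rightarrow> complex \<Rightarrow> complex \<Rightarrow> real" where
  "exit_time A B C P d = Sup {s::real. 0 \<le> s \<and> P + of_real s * d \<in> convex hull {A, B, C}}"

definition side_dir :: "complex \<Rightarrow> complex \<Rightarrow> complex \<Rightarrow> complex \<Rightarrow> complex" where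
  "side_dir A B C Q =
     (if Q \<in> closed_segment A B then B - A
      else if Q \<in> closed_segment B C then C - B else C - A)"

definition bstep :: "complex \<Rightarrow> complex \<Rightarrow> complex \<Rightarrow> complex \<times> complex \<Rightarrow> complex \<times> complex" where
  "bstep A B C = (\<lambda>(P, d). let Q = P + of_real (exit_time A B C P d) * d
                             in (Q, refl_dir (side_dir A B C Q) d))"

text \<open>orbit k = (k-th boundary point, direction after it); orbit 0 = (A, initial direction).\<close>
definition orbit :: "complex \<Rightarrow> complex \<Rightarrow> complex \<Rightarrow> real \<Rightarrow> nat \<Rightarrow> complex \<times> complex" where
  "orbit A B C t k = (bstep A B C ^^ k) (A, (of_real (1 - t) * B + of_real t * C) - A)"

text \<open>Direction t has index p: the trajectory is a generalized diagonal with exactly p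
  reflections (the (p+1)-st boundary point is the first one that is a vertex).\<close>
definition has_index :: "complex \<Rightarrow> complex \<Rightarrow> complex \<Rightarrow> real \<Rightarrow> nat \<Rightarrow> bool" where
  "has_index A B C t p \<longleftrightarrow> t \<in> {0..1} \<and>
     fst (orbit A B C t (Suc p)) \<in> {A, B, C} \<and>
     (\<forall>j<p. fst (orbit A B C t (Suc j)) \<notin> {A, B, C})"

definition cut_pts :: "complex \<Rightarrow> complex \<Rightarrow> complex \<Rightarrow> nat \<Rightarrow> real set" where
  "cut_pts A B C m = {t. \<exists>p\<le>m. has_index A B C t p}"

definition strictly_between :: "real \<Rightarrow> real \<Rightarrow> real \<Rightarrow> bool" where
  "strictly_between x y w \<longleftrightarrow> min x y < w \<and> w < max x y"

definition good_position ::
  "complex \<Rightarrow> complex \<Rightarrow> complex \<Rightarrow> real \<Rightarrow> real \<Rightarrow> real \<Rightarrow> nat \<Rightarrow> nat \<Rightarrow> nat \<Rightarrow> bool" where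
  "good_position A B C xp xq xr p q r \<longleftrightarrow>
     has_index A B C xp p \<and> has_index A B C xq q \<and> has_index A B C xr r \<and>
     p < q \<and> q < r \<and> strictly_between xp xq xr \<and>
     (\<forall>w. strictly_between xp xq w \<and> w \<in> cut_pts A B C r \<longrightarrow> w = xr)"

definition is_interval_of :: "complex \<Rightarrow> complex \<Rightarrow> complex \<Rightarrow> nat \<Rightarrow> real \<Rightarrow> real \<Rightarrow> bool" where
  "is_interval_of A B C n a b \<longleftrightarrow> a < b \<and> a \<in> cut_pts A B C n \<and> b \<in> cut_pts A B C n \<and>
     (\<forall>w. a < w \<and> w < b \<longrightarrow> w \<notin> cut_pts A B C n)"

end

theory Submission
  imports Defs
begin
definition cross :: "complex \<Rightarrow> complex \<Rightarrow> real" where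
  "cross u v = Re u * Im v - Im u * Re v"

lemma cross_zero_collinear:
  assumes "cross (B - A) (C - A) = 0" shows "collinear {A, B, C}"
proof (cases "A = C")
  case True then show ?thesis by (simp add: collinear_3_expand)
next
  case False
  define bx where "bx = Re B - Re A"
  define by' where "by' = Im B - Im A"
  define cx where "cx = Re C - Re A"
  define cy where "cy = Im C - Im A"
  define N where "N = cx^2 + cy^2"
  have "cx \<noteq> 0 \<or> cy \<noteq> 0" using False unfolding cx_def cy_def by (auto simp: complex_eq_iff)
  hence N: "N \<noteq> 0" unfolding N_def by (simp add: sum_power2_eq_zero_iff)
  define s where "s = (bx*cx + by'*cy) / N"
  have c: "bx*cy = by'*cx"
    using assms by (simp add: cross_def bx_def by'_def cx_def cy_def)
  have e1: "bx = s * cx"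
  proof -
    have "s * cx * N = (bx*cx + by'*cy) * cx" using N unfolding s_def by simp
    also have "\<dots> = bx * N" unfolding N_def power2_eq_square using c
      by (simp add: algebra_simps)
    finally show ?thesis using N by simp
  qed
  have e2: "by' = s * cy"
  proof -
    have "s * cy * N = (bx*cx + by'*cy) * cy" using N unfolding s_def by simp
    also have "\<dots> = by' * N" unfolding N_def power2_eq_square using c
      by (simp add: algebra_simps)
    finally show ?thesis using N by simp
  qed
  have "B = (1 - s) *\<^sub>R A + (1 - (1 - s)) *\<^sub>R C"
    using e1 e2 unfolding bx_def by'_def cx_def cy_def
    by (simp add: complex_eq_iff algebra_simps)
  then show ?thesis unfolding collinear_3_expand by blast
qed


definition lam :: "complex \<Rightarrow> complex \<Rightarrow> complex \<Rightarrow> complex \<Rightarrow> real" where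
  "lam X Y Z z = cross (Y - z) (Z - z) / cross (Y - X) (Z - X)"

lemma D_cyc: "cross (Z - Y) (X - Y) = cross (Y - X) (Z - X)"
  by (simp add: cross_def algebra_simps)
lemma D_swap: "cross (Z - X) (Y - X) = - cross (Y - X) (Z - X)"
  by (simp add: cross_def algebra_simps)
lemma cross_anti: "cross v u = - cross u v" by (simp add: cross_def)
lemma lam_swap: "lam X Z Y z = lam X Y Z z"
  unfolding lam_def by (subst (1 2) cross_anti) simp

lemma num_sum: "cross (Y - z) (Z - z) + cross (Z - z) (X - z) + cross (X - z) (Y - z) = cross (Y - X) (Z - X)"
  by (simp add: cross_def algebra_simps)

lemma num_combo_Re: "cross (Y - z) (Z - z) * Re X + cross (Z - z) (X - z) * Re Y + cross (X - z) (Y - z) * Re Z = cross (Y - X) (Z - X) * Re z"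
  by (simp add: cross_def algebra_simps)
lemma num_combo_Im: "cross (Y - z) (Z - z) * Im X + cross (Z - z) (X - z) * Im Y + cross (X - z) (Y - z) * Im Z = cross (Y - X) (Z - X) * Im z"
  by (simp add: cross_def algebra_simps)

lemma lam_sum:
  assumes "cross (Y - X) (Z - X) \<noteq> 0"
  shows "lam X Y Z z + lam Y Z X z + lam Z X Y z = 1"
proof -
  have d1: "cross (Z - Y) (X - Y) = cross (Y - X) (Z - X)" by (rule D_cyc)
  have d2: "cross (X - Z) (Y - Z) = cross (Y - X) (Z - X)" by (simp add: cross_def algebra_simps)
  show ?thesis using assms num_sum[of Y z Z X] unfolding lam_def d1 d2
    by (simp add: add_divide_distrib[symmetric])
qed

lemma lam_combo:
  assumes "cross (Y - X) (Z - X) \<noteq> 0"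
  shows "z = lam X Y Z z *\<^sub>R X + lam Y Z X z *\<^sub>R Y + lam Z X Y z *\<^sub>R Z"
proof -
  have d1: "cross (Z - Y) (X - Y) = cross (Y - X) (Z - X)" by (rule D_cyc)
  have d2: "cross (X - Z) (Y - Z) = cross (Y - X) (Z - X)" by (simp add: cross_def algebra_simps)
  define D where "D = cross (Y - X) (Z - X)"
  have a: "Re z = (cross (Y - z) (Z - z) * Re X + cross (Z - z) (X - z) * Re Y + cross (X - z) (Y - z) * Re Z) / D"
    using assms num_combo_Re[of Y z Z X] unfolding D_def by simp
  have b: "Im z = (cross (Y - z) (Z - z) * Im X + cross (Z - z) (X - z) * Im Y + cross (X - z) (Y - z) * Im Z) / D"
    using assms num_combo_Im[of Y z Z X] unfolding D_def by simp
  show ?thesis unfolding lam_def d1 d2 complex_eq_iff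
    using a b unfolding D_def by (simp add: add_divide_distrib)
qed

lemma lam_of_combo:
  assumes "cross (Y - X) (Z - X) \<noteq> 0" "u + v + w = 1"
  shows "lam X Y Z (u *\<^sub>R X + v *\<^sub>R Y + w *\<^sub>R Z) = u"
proof -
  have w: "w = 1 - u - v" using assms(2) by simp
  have "cross (Y - (u *\<^sub>R X + v *\<^sub>R Y + w *\<^sub>R Z)) (Z - (u *\<^sub>R X + v *\<^sub>R Y + w *\<^sub>R Z)) = u * cross (Y - X) (Z - X)"
    unfolding w by (simp add: cross_def algebra_simps)
  then show ?thesis using assms(1) unfolding lam_def by simp
qed


lemma lam_val:
  assumes "cross (Y - X) (Z - X) \<noteq> 0" "u + v + w = 1" "z = u *\<^sub>R X + v *\<^sub>R Y + w *\<^sub>R Z"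
  shows "lam X Y Z z = u" "lam Y Z X z = v" "lam Z X Y z = w"
proof -
  show "lam X Y Z z = u" using lam_of_combo[OF assms(1,2)] assms(3) by simp
  have d1: "cross (Z - Y) (X - Y) \<noteq> 0" using assms(1) D_cyc by metis
  have "lam Y Z X (v *\<^sub>R Y + w *\<^sub>R Z + u *\<^sub>R X) = v"
    by (rule lam_of_combo[OF d1]) (use assms(2) in simp)
  then show "lam Y Z X z = v" using assms(3) by (simp add: algebra_simps)
  have d2: "cross (X - Z) (Y - Z) \<noteq> 0" using assms(1) by (simp add: cross_def algebra_simps)
  have "lam Z X Y (w *\<^sub>R Z + u *\<^sub>R X + v *\<^sub>R Y) = w"
    by (rule lam_of_combo[OF d2]) (use assms(2) in simp)
  then show "lam Z X Y z = w" using assms(3) by (simp add: algebra_simps)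
qed

lemma hull_lam:
  assumes "cross (Y - X) (Z - X) \<noteq> 0"
  shows "z \<in> convex hull {X, Y, Z} \<longleftrightarrow> 0 \<le> lam X Y Z z \<and> 0 \<le> lam Y Z X z \<and> 0 \<le> lam Z X Y z"
proof
  assume "z \<in> convex hull {X, Y, Z}"
  then obtain u v w where "0 \<le> u" "0 \<le> v" "0 \<le> w" "u + v + w = 1" "z = u *\<^sub>R X + v *\<^sub>R Y + w *\<^sub>R Z"
    unfolding convex_hull_3 by blast
  then show "0 \<le> lam X Y Z z \<and> 0 \<le> lam Y Z X z \<and> 0 \<le> lam Z X Y z"
    using lam_val[OF assms] by metis
next
  assume "0 \<le> lam X Y Z z \<and> 0 \<le> lam Y Z X z \<and> 0 \<le> lam Z X Y z"
  then show "z \<in> convex hull {X, Y, Z}"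
    unfolding convex_hull_3 using lam_combo[OF assms, of z] lam_sum[OF assms, of z] by blast
qed

definition mu :: "complex \<Rightarrow> complex \<Rightarrow> complex \<Rightarrow> complex \<Rightarrow> real" where
  "mu X Y Z d = cross (Z - Y) d / cross (Y - X) (Z - X)"

lemma ray_lam: "lam X Y Z (P + of_real s * d) = lam X Y Z P + s * mu X Y Z d"
proof -
  have "cross (Y - (P + of_real s * d)) (Z - (P + of_real s * d)) = cross (Y - P) (Z - P) + s * cross (Z - Y) d"
    by (simp add: cross_def algebra_simps)
  then show ?thesis unfolding lam_def mu_def by (simp add: add_divide_distrib)
qed

lemma exit_time_eq:
  assumes "\<And>s. (0 \<le> s \<and> P + of_real s * d \<in> convex hull {A, B, C}) \<longleftrightarrow> (0 \<le> s \<and> s \<le> s0)" "0 \<le> s0"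
  shows "exit_time A B C P d = s0"
proof -
  have "{s::real. 0 \<le> s \<and> P + of_real s * d \<in> convex hull {A, B, C}} = {0..s0}"
    by (intro set_eqI) (simp only: mem_Collect_eq atLeastAtMost_iff assms(1))
  then show ?thesis unfolding exit_time_def using assms(2) by simp
qed


lemma real_case:
  fixes a b mX mY mZ :: real
  assumes "a > 0" "b > 0" "mX > 0" "mX + mY + mZ = 0" "a * mZ - b * mY > 0"
  shows "mY < 0" "a / (- mY) > 0" "b + (a / (- mY)) * mZ > 0"
    "\<And>s. (0 \<le> s \<and> 0 \<le> s * mX \<and> 0 \<le> a + s * mY \<and> 0 \<le> b + s * mZ) \<longleftrightarrow> (0 \<le> s \<and> s \<le> a / (- mY))"
proof -
  show mY: "mY < 0"
  proof (rule ccontr)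
    assume "\<not> mY < 0"
    then have "mZ < 0" using assms by linarith
    then have "a * mZ < 0" using assms(1) by (simp add: mult_pos_neg)
    moreover have "b * mY \<ge> 0" using \<open>\<not> mY < 0\<close> assms(2) by simp
    ultimately show False using assms(5) by linarith
  qed
  show "a / (- mY) > 0" using mY assms(1) by (simp add: divide_pos_neg)
  have e: "b + (a / (- mY)) * mZ = (a * mZ - b * mY) / (- mY)"
    using mY by (simp add: field_simps)
  show pos: "b + (a / (- mY)) * mZ > 0" unfolding e using mY assms(5) by (intro divide_pos_pos) auto
  fix s :: real
  show "(0 \<le> s \<and> 0 \<le> s * mX \<and> 0 \<le> a + s * mY \<and> 0 \<le> b + s * mZ) \<longleftrightarrow> (0 \<le> s \<and> s \<le> a / (- mY))"
  proof
    assume h: "0 \<le> s \<and> 0 \<le> s * mX \<and> 0 \<le> a + s * mY \<and> 0 \<le> b + s * mZ"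
    then have "s * (- mY) \<le> a" by simp
    moreover have "- mY > 0" using mY by simp
    ultimately have "s \<le> a / (- mY)" using pos_le_divide_eq by blast
    then show "0 \<le> s \<and> s \<le> a / (- mY)" using h by simp
  next
    assume h: "0 \<le> s \<and> s \<le> a / (- mY)"
    moreover have "- mY > 0" using mY by simp
    ultimately have "s * (- mY) \<le> a" using pos_le_divide_eq by blast
    then have 1: "0 \<le> a + s * mY" by simp
    have 2: "0 \<le> s * mX" using h assms(3) by simp
    have 3: "0 \<le> b + s * mZ"
    proof (cases "mZ \<ge> 0")
      case True then show ?thesis using h assms(2) by simp
    next
      case False
      then have "mZ \<le> 0" by simp
      have "(a / (- mY)) * mZ \<le> s * mZ" by (rule mult_right_mono_neg) (use h \<open>mZ \<le> 0\<close> in auto)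
      then have "s * mZ \<ge> (a / (- mY)) * mZ" by simp
      then show ?thesis using pos by linarith
    qed
    show "0 \<le> s \<and> 0 \<le> s * mX \<and> 0 \<le> a + s * mY \<and> 0 \<le> b + s * mZ" using 1 2 3 h by simp
  qed
qed

lemma real_vertex:
  fixes a b mX mY mZ :: real
  assumes "a > 0" "b > 0" "mX > 0" "mX + mY + mZ = 0" "a * mZ - b * mY = 0"
  shows "mY < 0" "a / (- mY) > 0" "b + (a / (- mY)) * mZ = 0"
    "\<And>s. (0 \<le> s \<and> 0 \<le> s * mX \<and> 0 \<le> a + s * mY \<and> 0 \<le> b + s * mZ) \<longleftrightarrow> (0 \<le> s \<and> s \<le> a / (- mY))"
proof -
  show mY: "mY < 0"
  proof (rule ccontr)
    assume "\<not> mY < 0"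
    then have "mZ < 0" using assms by linarith
    then have "a * mZ < 0" using assms(1) by (simp add: mult_pos_neg)
    moreover have "b * mY \<ge> 0" using \<open>\<not> mY < 0\<close> assms(2) by simp
    ultimately show False using assms(5) by linarith
  qed
  have mZ: "mZ < 0"
  proof (rule ccontr)
    assume "\<not> mZ < 0"
    then have "a * mZ \<ge> 0" using assms(1) by simp
    moreover have "b * mY < 0" using mY assms(2) by (simp add: mult_pos_neg)
    ultimately show False using assms(5) by linarith
  qed
  show "a / (- mY) > 0" using mY assms(1) by (simp add: divide_pos_neg)
  have e: "b + (a / (- mY)) * mZ = (a * mZ - b * mY) / (- mY)"
    using mY by (simp add: field_simps)
  show pos: "b + (a / (- mY)) * mZ = 0" unfolding e using mY assms(5) by simp
  fix s :: real
  show "(0 \<le> s \<and> 0 \<le> s * mX \<and> 0 \<le> a + s * mY \<and> 0 \<le> b + s * mZ) \<longleftrightarrow> (0 \<le> s \<and> s \<le> a / (- mY))"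
  proof
    assume h: "0 \<le> s \<and> 0 \<le> s * mX \<and> 0 \<le> a + s * mY \<and> 0 \<le> b + s * mZ"
    then have "s * (- mY) \<le> a" by simp
    moreover have "- mY > 0" using mY by simp
    ultimately have "s \<le> a / (- mY)" using pos_le_divide_eq by blast
    then show "0 \<le> s \<and> s \<le> a / (- mY)" using h by simp
  next
    assume h: "0 \<le> s \<and> s \<le> a / (- mY)"
    moreover have "- mY > 0" using mY by simp
    ultimately have "s * (- mY) \<le> a" using pos_le_divide_eq by blast
    then have 1: "0 \<le> a + s * mY" by simp
    have 2: "0 \<le> s * mX" using h assms(3) by simp
    have "(a / (- mY)) * mZ \<le> s * mZ" by (rule mult_right_mono_neg) (use h mZ in auto)
    then have 3: "0 \<le> b + s * mZ" using pos by linarith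
    show "0 \<le> s \<and> 0 \<le> s * mX \<and> 0 \<le> a + s * mY \<and> 0 \<le> b + s * mZ" using 1 2 3 h by simp
  qed
qed


lemma cross_Im: "cross u v = Im (cnj u * v)"
  by (simp add: cross_def)

lemma refl_refl: "e \<noteq> 0 \<Longrightarrow> refl_dir e (refl_dir e d) = d"
  unfolding refl_dir_def by (simp add: field_simps)

lemma refl_scale: "r \<noteq> 0 \<Longrightarrow> refl_dir (of_real r * e) = refl_dir e"
  unfolding refl_dir_def by (rule ext) (simp add: field_simps)

lemma refl_add: "refl_dir e (u + v) = refl_dir e u + refl_dir e v"
  unfolding refl_dir_def by (simp add: algebra_simps)

lemma refl_diff: "refl_dir e (u - v) = refl_dir e u - refl_dir e v"
  unfolding refl_dir_def by (simp add: algebra_simps)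

lemma refl_real: "refl_dir e (of_real r * u) = of_real r * refl_dir e u"
  unfolding refl_dir_def by (simp add: algebra_simps)

lemma refl_fix: "e \<noteq> 0 \<Longrightarrow> refl_dir e (of_real r * e) = of_real r * e"
  unfolding refl_dir_def by (simp add: field_simps)

lemma cross_refl: assumes "e \<noteq> 0" shows "cross e (refl_dir e u) = - cross e u"
proof -
  have "cnj e \<noteq> 0" using assms by simp
  then have "cnj e * (e / cnj e * cnj u) = e * cnj u" by simp
  also have "\<dots> = cnj (cnj e * u)" by simp
  finally have c: "cnj e * (e / cnj e * cnj u) = cnj (cnj e * u)" .
  show ?thesis unfolding cross_Im refl_dir_def c by simp
qed

lemma cross_refl2: assumes "e \<noteq> 0" shows "cross (refl_dir e u) (refl_dir e v) = - cross u v"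
proof -
  have "cnj e \<noteq> 0" using assms by simp
  then have "cnj (e / cnj e * cnj u) * (e / cnj e * cnj v) = u * cnj v"
    using assms by (simp add: field_simps)
  also have "\<dots> = cnj (cnj u * v)" by simp
  finally have c: "cnj (e / cnj e * cnj u) * (e / cnj e * cnj v) = cnj (cnj u * v)" .
  show ?thesis unfolding cross_Im refl_dir_def c by simp
qed


lemma D_cyc2: "cross (X - Z) (Y - Z) = cross (Y - X) (Z - X)"
  by (simp add: cross_def algebra_simps)

lemma mu_sum: "mu X Y Z d + mu Y Z X d + mu Z X Y d = 0"
proof -
  have "cross (Z - Y) d + cross (X - Z) d + cross (Y - X) d = 0" by (simp add: cross_def algebra_simps)
  then show ?thesis unfolding mu_def D_cyc D_cyc2 by (simp add: add_divide_distrib[symmetric])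
qed

lemma delta_id:
  assumes "a + b = 1" "P = a *\<^sub>R Y + b *\<^sub>R Z"
  shows "a * mu Z X Y d - b * mu Y Z X d = cross d (X - P) / cross (Y - X) (Z - X)"
proof -
  have b: "b = 1 - a" using assms(1) by simp
  have "a * cross (Y - X) d - b * cross (X - Z) d = cross d (X - P)"
    unfolding assms(2) b by (simp add: cross_def algebra_simps)
  then show ?thesis unfolding mu_def D_cyc D_cyc2 by (simp add: diff_divide_distrib[symmetric])
qed

lemma ray_mem:
  assumes D: "cross (Y - X) (Z - X) \<noteq> 0"
  and H: "convex hull {X, Y, Z} = convex hull {A, B, C}"
  shows "P + of_real s * d \<in> convex hull {A, B, C} \<longleftrightarrow>
    0 \<le> lam X Y Z P + s * mu X Y Z d \<and> 0 \<le> lam Y Z X P + s * mu Y Z X d \<and> 0 \<le> lam Z X Y P + s * mu Z X Y d"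
  unfolding H[symmetric] hull_lam[OF D] ray_lam ..

lemma exit_case:
  assumes D: "cross (Y - X) (Z - X) \<noteq> 0"
  and H: "convex hull {X, Y, Z} = convex hull {A, B, C}"
  and ab: "a > 0" "b > 0" "a + b = 1" and P: "P = a *\<^sub>R Y + b *\<^sub>R Z"
  and m: "mu X Y Z d > 0" and dl: "cross d (X - P) / cross (Y - X) (Z - X) > 0"
  shows "exit_time A B C P d > 0"
    "\<exists>a' b'. a' > 0 \<and> b' > 0 \<and> a' + b' = 1 \<and> P + of_real (exit_time A B C P d) * d = a' *\<^sub>R X + b' *\<^sub>R Z"
    "mu Y Z X d < 0"
proof -
  have P': "P = 0 *\<^sub>R X + a *\<^sub>R Y + b *\<^sub>R Z" using P by simp
  have l: "lam X Y Z P = 0" "lam Y Z X P = a" "lam Z X Y P = b"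
    using lam_val[OF D _ P'] ab by auto
  note rc = real_case[OF ab(1,2) m mu_sum[of X Y Z d], unfolded delta_id[OF ab(3) P], OF dl]
  define s0 where "s0 = a / (- mu Y Z X d)"
  have et: "exit_time A B C P d = s0"
    by (rule exit_time_eq) (use rc(2,4) ray_mem[OF D H] l in \<open>auto simp: s0_def\<close>)
  show "exit_time A B C P d > 0" using et rc(2) s0_def by simp
  show "mu Y Z X d < 0" by (rule rc(1))
  define Q where "Q = P + of_real s0 * d"
  have s0p: "s0 > 0" using rc(2) s0_def by simp
  have q1: "lam X Y Z Q > 0" unfolding Q_def ray_lam l using s0p m by simp
  have q2: "lam Y Z X Q = 0" unfolding Q_def ray_lam l using rc(1) s0_def by simp
  have q3: "lam Z X Y Q > 0" unfolding Q_def ray_lam l using rc(3) s0_def by simp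
  have "Q = lam X Y Z Q *\<^sub>R X + lam Y Z X Q *\<^sub>R Y + lam Z X Y Q *\<^sub>R Z" by (rule lam_combo[OF D])
  then have "Q = lam X Y Z Q *\<^sub>R X + lam Z X Y Q *\<^sub>R Z" using q2 by simp
  moreover have "lam X Y Z Q + lam Z X Y Q = 1" using lam_sum[OF D, of Q] q2 by simp
  ultimately show "\<exists>a' b'. a' > 0 \<and> b' > 0 \<and> a' + b' = 1 \<and> P + of_real (exit_time A B C P d) * d = a' *\<^sub>R X + b' *\<^sub>R Z"
    using q1 q3 et Q_def by blast
qed

lemma exit_vertex:
  assumes D: "cross (Y - X) (Z - X) \<noteq> 0"
  and H: "convex hull {X, Y, Z} = convex hull {A, B, C}"
  and ab: "a > 0" "b > 0" "a + b = 1" and P: "P = a *\<^sub>R Y + b *\<^sub>R Z"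
  and m: "mu X Y Z d > 0" and dl: "cross d (X - P) = 0"
  shows "exit_time A B C P d > 0" "P + of_real (exit_time A B C P d) * d = X"
proof -
  have P': "P = 0 *\<^sub>R X + a *\<^sub>R Y + b *\<^sub>R Z" using P by simp
  have l: "lam X Y Z P = 0" "lam Y Z X P = a" "lam Z X Y P = b"
    using lam_val[OF D _ P'] ab by auto
  have dl': "a * mu Z X Y d - b * mu Y Z X d = 0" unfolding delta_id[OF ab(3) P] dl by simp
  note rc = real_vertex[OF ab(1,2) m mu_sum[of X Y Z d] dl']
  define s0 where "s0 = a / (- mu Y Z X d)"
  have et: "exit_time A B C P d = s0"
    by (rule exit_time_eq) (use rc(2,4) ray_mem[OF D H] l in \<open>auto simp: s0_def\<close>)
  show "exit_time A B C P d > 0" using et rc(2) s0_def by simp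
  define Q where "Q = P + of_real s0 * d"
  have q2: "lam Y Z X Q = 0" unfolding Q_def ray_lam l using rc(1) s0_def by simp
  have q3: "lam Z X Y Q = 0" unfolding Q_def ray_lam l using rc(3) s0_def by simp
  have q1: "lam X Y Z Q = 1" using lam_sum[OF D, of Q] q2 q3 by simp
  have "Q = lam X Y Z Q *\<^sub>R X + lam Y Z X Q *\<^sub>R Y + lam Z X Y Q *\<^sub>R Z" by (rule lam_combo[OF D])
  then show "P + of_real (exit_time A B C P d) * d = X" using q1 q2 q3 et Q_def by simp
qed


definition perm6 :: "complex \<Rightarrow> complex \<Rightarrow> complex \<Rightarrow> complex \<Rightarrow> complex \<Rightarrow> complex \<Rightarrow> bool" where
  "perm6 A B C X Y Z \<longleftrightarrow> (X, Y, Z) \<in> {(A,B,C), (A,C,B), (B,A,C), (B,C,A), (C,A,B), (C,B,A)}"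

lemma perm6_swap: "perm6 A B C X Y Z \<Longrightarrow> perm6 A B C Y X Z"
  unfolding perm6_def by auto
lemma perm6_swap2: "perm6 A B C X Y Z \<Longrightarrow> perm6 A B C X Z Y"
  unfolding perm6_def by auto
lemma perm6_id: "perm6 A B C A B C"
  unfolding perm6_def by auto

lemma perm6_D:
  assumes "perm6 A B C X Y Z" "cross (B - A) (C - A) \<noteq> 0"
  shows "cross (Y - X) (Z - X) \<noteq> 0"
proof -
  have "cross (Y - X) (Z - X) = cross (B - A) (C - A) \<or> cross (Y - X) (Z - X) = - cross (B - A) (C - A)"
    using assms(1) unfolding perm6_def by (auto simp: cross_def algebra_simps)
  then show ?thesis using assms(2) by auto
qed

lemma perm6_set:
  assumes "perm6 A B C X Y Z" shows "{X, Y, Z} = {A, B, C}"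
  using assms unfolding perm6_def by auto

lemma perm6_hull:
  assumes "perm6 A B C X Y Z" shows "convex hull {X, Y, Z} = convex hull {A, B, C}"
  using perm6_set[OF assms] by simp

lemma seg_lam:
  assumes "cross (V - U) (W - U) \<noteq> 0" "z \<in> closed_segment U V"
  shows "lam W U V z = 0"
proof -
  obtain u where "z = (1 - u) *\<^sub>R U + u *\<^sub>R V" using assms(2) unfolding closed_segment_def by blast
  then have z: "z = 0 *\<^sub>R W + (1 - u) *\<^sub>R U + u *\<^sub>R V" by simp
  have "cross (U - W) (V - W) = cross (V - U) (W - U)" by (simp add: cross_def algebra_simps)
  then have d: "cross (U - W) (V - W) \<noteq> 0" using assms(1) by simp
  show ?thesis using lam_val(1)[OF d _ z] by simp
qed

lemma seg_in: assumes "a > 0" "b > 0" "a + b = 1" shows "a *\<^sub>R U + b *\<^sub>R V \<in> closed_segment U V"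
proof -
  have "a = 1 - b" using assms(3) by simp
  then have "a *\<^sub>R U + b *\<^sub>R V = (1 - b) *\<^sub>R U + b *\<^sub>R V" by (simp only:)
  moreover have "0 \<le> b" "b \<le> 1" using assms by auto
  ultimately show ?thesis unfolding closed_segment_def by blast
qed

lemma side_AB:
  assumes "a > 0" "b > 0" "a + b = 1" "Q = a *\<^sub>R A + b *\<^sub>R B"
  shows "side_dir A B C Q = B - A"
proof -
  have "Q \<in> closed_segment A B" using seg_in[OF assms(1-3)] assms(4) by simp
  then show ?thesis unfolding side_dir_def by simp
qed

lemma side_BC:
  assumes D: "cross (B - A) (C - A) \<noteq> 0" and "a > 0" "b > 0" "a + b = 1" "Q = a *\<^sub>R B + b *\<^sub>R C"
  shows "side_dir A B C Q = C - B"
proof -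
  have "lam C A B Q = b" using lam_val(3)[OF D, of 0 a b Q] assms by simp
  then have "Q \<notin> closed_segment A B" using seg_lam[OF D] assms(3) by force
  moreover have "Q \<in> closed_segment B C" using seg_in[OF assms(2-4)] assms(5) by simp
  ultimately show ?thesis unfolding side_dir_def by simp
qed

lemma side_CA:
  assumes D: "cross (B - A) (C - A) \<noteq> 0" and "a > 0" "b > 0" "a + b = 1" "Q = a *\<^sub>R A + b *\<^sub>R C"
  shows "side_dir A B C Q = C - A"
proof -
  have "lam C A B Q = b" using lam_val(3)[OF D, of a 0 b Q] assms by simp
  then have "Q \<notin> closed_segment A B" using seg_lam[OF D] assms(3) by force
  moreover have "lam A B C Q = a" using lam_val(1)[OF D, of a 0 b Q] assms by simp
  then have "Q \<notin> closed_segment B C"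
  proof -
    have "cross (C - B) (A - B) = cross (B - A) (C - A)" by (simp add: cross_def algebra_simps)
    then have D': "cross (C - B) (A - B) \<noteq> 0" using D by simp
    show ?thesis using seg_lam[OF D', of Q] \<open>lam A B C Q = a\<close> assms(2) by force
  qed
  ultimately show ?thesis unfolding side_dir_def by simp
qed

lemma refl_neg: "refl_dir (- e) = refl_dir e"
  using refl_scale[of "-1" e] by simp

lemma side_refl:
  assumes D: "cross (B - A) (C - A) \<noteq> 0" and p: "perm6 A B C X Y Z"
    and ab: "a > 0" "b > 0" "a + b = 1" and Q: "Q = a *\<^sub>R X + b *\<^sub>R Z"
  shows "refl_dir (side_dir A B C Q) = refl_dir (Z - X)"
proof -
  have ba: "b + a = 1" using ab(3) by simp
  have m: "Q = b *\<^sub>R Z + a *\<^sub>R X" using Q by simp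
  consider "(X,Y,Z) = (A,B,C)" | "(X,Y,Z) = (A,C,B)" | "(X,Y,Z) = (B,A,C)" | "(X,Y,Z) = (B,C,A)"
    | "(X,Y,Z) = (C,A,B)" | "(X,Y,Z) = (C,B,A)" using p unfolding perm6_def by blast
  then show ?thesis
  proof cases
    case 1 then have "Q = a *\<^sub>R A + b *\<^sub>R C" using Q by simp
    then show ?thesis using side_CA[OF D ab] 1 by simp
  next
    case 2 then have "Q = a *\<^sub>R A + b *\<^sub>R B" using Q by simp
    then show ?thesis using side_AB[OF ab] 2 by simp
  next
    case 3 then have "Q = a *\<^sub>R B + b *\<^sub>R C" using Q by simp
    then show ?thesis using side_BC[OF D ab] 3 by simp
  next
    case 4 then have "Q = b *\<^sub>R A + a *\<^sub>R B" using Q by simp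
    then show ?thesis using side_AB[OF ab(2,1) ba] refl_neg[of "A - B"] 4 by simp
  next
    case 5 then have "Q = b *\<^sub>R B + a *\<^sub>R C" using Q by simp
    then show ?thesis using side_BC[OF D ab(2,1) ba] refl_neg[of "C - B"] 5 by simp
  next
    case 6 then have "Q = b *\<^sub>R A + a *\<^sub>R C" using Q by simp
    then show ?thesis using side_CA[OF D ab(2,1) ba] refl_neg[of "C - A"] 6 by simp
  qed
qed

lemma not_vertex:
  assumes D: "cross (Y - X) (Z - X) \<noteq> 0" and ab: "a > 0" "b > 0" "a + b = 1" and Q: "Q = a *\<^sub>R X + b *\<^sub>R Z"
  shows "Q \<notin> {X, Y, Z}"
proof -
  have Q': "Q = a *\<^sub>R X + 0 *\<^sub>R Y + b *\<^sub>R Z" using Q by simp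
  have l: "lam X Y Z Q = a" "lam Y Z X Q = 0" "lam Z X Y Q = b" using lam_val[OF D _ Q'] ab(3) by auto
  have vX: "lam Z X Y X = 0" using lam_val(3)[OF D, of 1 0 0 X] by simp
  have vY: "lam Y Z X Y = 1" using lam_val(2)[OF D, of 0 1 0 Y] by simp
  have vZ: "lam X Y Z Z = 0" using lam_val(1)[OF D, of 0 0 1 Z] by simp
  show ?thesis using l vX vY vZ ab by auto
qed


definition dir0 :: "complex \<Rightarrow> complex \<Rightarrow> complex \<Rightarrow> real \<Rightarrow> complex" where
  "dir0 A B C t = (of_real (1 - t) * B + of_real t * C) - A"

lemma orbit_0: "orbit A B C t 0 = (A, dir0 A B C t)"
  unfolding orbit_def dir0_def by simp

lemma orbit_Suc: "orbit A B C t (Suc k) = bstep A B C (orbit A B C t k)"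
  unfolding orbit_def by simp

lemma bstep_eq: "bstep A B C (P, d) = (P + of_real (exit_time A B C P d) * d,
   refl_dir (side_dir A B C (P + of_real (exit_time A B C P d) * d)) d)"
  unfolding bstep_def by (simp add: Let_def)

lemma step0_exit:
  assumes D: "cross (B - A) (C - A) \<noteq> 0" and t: "0 \<le> t" "t \<le> 1"
  shows "exit_time A B C A (dir0 A B C t) = 1"
proof (rule exit_time_eq)
  fix s :: real
  have e: "A + of_real s * dir0 A B C t = (1 - s) *\<^sub>R A + (s * (1 - t)) *\<^sub>R B + (s * t) *\<^sub>R C"
    unfolding dir0_def by (simp add: scaleR_conv_of_real algebra_simps)
  have sm: "(1 - s) + s * (1 - t) + s * t = 1" by (simp add: algebra_simps)
  note lv = lam_val[OF D sm e]
  show "(0 \<le> s \<and> A + of_real s * dir0 A B C t \<in> convex hull {A, B, C}) \<longleftrightarrow> (0 \<le> s \<and> s \<le> 1)"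
    unfolding hull_lam[OF D] lv using t by auto
qed simp

definition binv :: "complex \<Rightarrow> complex \<Rightarrow> complex \<Rightarrow> real set \<Rightarrow> nat \<Rightarrow> complex \<Rightarrow> complex \<Rightarrow> complex
   \<Rightarrow> (complex \<Rightarrow> complex) \<Rightarrow> (complex \<Rightarrow> complex) \<Rightarrow> real \<Rightarrow> bool" where
  "binv A B C I k X Y Z g l \<kappa> \<longleftrightarrow> perm6 A B C X Y Z \<and> (\<forall>z w. g z - g w = l (z - w)) \<and>
     (\<forall>r u. l (of_real r * u) = of_real r * l u) \<and> (\<forall>u v. cross (l u) (l v) = \<kappa> * cross u v) \<and> \<kappa> \<noteq> 0 \<and>
     (\<forall>t\<in>I. \<exists>a b L. a > 0 \<and> b > 0 \<and> a + b = 1 \<and> fst (orbit A B C t k) = a *\<^sub>R Y + b *\<^sub>R Z \<and>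
        mu X Y Z (snd (orbit A B C t k)) > 0 \<and> l (snd (orbit A B C t k)) = dir0 A B C t \<and>
        L > 0 \<and> g (fst (orbit A B C t k)) = A + of_real L * dir0 A B C t)"

lemma inv_base:
  assumes D: "cross (B - A) (C - A) \<noteq> 0" and I: "I \<subseteq> {0<..<1}"
  shows "binv A B C I 1 A B C (\<lambda>z. B + refl_dir (C - B) (z - B)) (refl_dir (C - B)) (-1)"
proof -
  have CB: "C - B \<noteq> 0" using D by (auto simp: cross_def)
  have glob: "perm6 A B C A B C" "\<forall>z w. (B + refl_dir (C - B) (z - B)) - (B + refl_dir (C - B) (w - B)) = refl_dir (C - B) (z - w)"
    "\<forall>r u. refl_dir (C - B) (of_real r * u) = of_real r * refl_dir (C - B) u"
    "\<forall>u v. cross (refl_dir (C - B) u) (refl_dir (C - B) v) = -1 * cross u v"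
    using perm6_id refl_diff refl_real cross_refl2[OF CB] by (auto simp: refl_diff[symmetric])
  have loc: "\<exists>a b L. a > 0 \<and> b > 0 \<and> a + b = 1 \<and> fst (orbit A B C t 1) = a *\<^sub>R B + b *\<^sub>R C \<and>
        mu A B C (snd (orbit A B C t 1)) > 0 \<and> refl_dir (C - B) (snd (orbit A B C t 1)) = dir0 A B C t \<and>
        L > 0 \<and> B + refl_dir (C - B) (fst (orbit A B C t 1) - B) = A + of_real L * dir0 A B C t" if t: "t \<in> I" for t
  proof -
    have t01: "0 < t" "t < 1" using t I by auto
    define Q where "Q = (1 - t) *\<^sub>R B + t *\<^sub>R C"
    have Qe: "A + of_real 1 * dir0 A B C t = Q" unfolding Q_def dir0_def by (simp add: scaleR_conv_of_real)
    have sd: "side_dir A B C Q = C - B" by (rule side_BC[OF D, of "1 - t" t]) (use t01 Q_def in auto)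
    have ex: "exit_time A B C A (dir0 A B C t) = 1" using step0_exit[OF D] t01 by simp
    have orb: "orbit A B C t 1 = (Q, refl_dir (C - B) (dir0 A B C t))"
      using orbit_Suc[of A B C t 0] unfolding orbit_0 bstep_eq ex Qe sd by simp
    have l1: "lam A B C A = 1" using lam_val(1)[OF D, of 1 0 0 A] by simp
    have l2: "lam A B C Q = 0" using lam_val(1)[OF D, of 0 "1 - t" t Q] Q_def by simp
    have "mu A B C (dir0 A B C t) = -1" using ray_lam[of A B C A 1 "dir0 A B C t"] unfolding Qe l1 l2 by simp
    moreover have "mu A B C (refl_dir (C - B) d) = - mu A B C d" for d
      unfolding mu_def cross_refl[OF CB] by simp
    ultimately have m: "mu A B C (refl_dir (C - B) (dir0 A B C t)) > 0" by simp
    have "Q - B = of_real t * (C - B)" unfolding Q_def by (simp add: scaleR_conv_of_real algebra_simps)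
    then have "refl_dir (C - B) (Q - B) = Q - B" using refl_fix[OF CB, of t] by simp
    then have g: "B + refl_dir (C - B) (Q - B) = A + of_real 1 * dir0 A B C t"
      unfolding Qe by simp
    show ?thesis
      by (rule exI[of _ "1 - t"], rule exI[of _ t], rule exI[of _ 1]) (use t01 orb m g refl_refl[OF CB] Q_def in auto)
  qed
  show ?thesis unfolding binv_def using glob loc by auto
qed


lemma mu_refl: assumes "Z \<noteq> X" shows "mu Y X Z (refl_dir (Z - X) d) = - mu Y Z X d"
proof -
  have e: "Z - X \<noteq> 0" using assms by simp
  have 1: "cross (X - Y) (Z - Y) = - cross (Z - Y) (X - Y)" by (simp add: cross_def)
  have 2: "cross (Z - X) d = - cross (X - Z) d" by (simp add: cross_def algebra_simps)
  show ?thesis unfolding mu_def cross_refl[OF e] 1 2 by simp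
qed

lemma inv_step_case:
  assumes D0: "cross (B - A) (C - A) \<noteq> 0"
  and iv: "binv A B C I k X Y Z g l \<kappa>"
  and pos: "\<forall>t\<in>I. cross (snd (orbit A B C t k)) (X - fst (orbit A B C t k)) / cross (Y - X) (Z - X) > 0"
  shows "binv A B C I (Suc k) Y X Z (\<lambda>z. g (X + refl_dir (Z - X) (z - X))) (\<lambda>u. l (refl_dir (Z - X) u)) (- \<kappa>)"
proof -
  have p: "perm6 A B C X Y Z" and gl: "\<forall>z w. g z - g w = l (z - w)"
    and lh: "\<forall>r u. l (of_real r * u) = of_real r * l u" and lc: "\<forall>u v. cross (l u) (l v) = \<kappa> * cross u v"
    and k0: "\<kappa> \<noteq> 0" using iv unfolding binv_def by auto
  have D: "cross (Y - X) (Z - X) \<noteq> 0" by (rule perm6_D[OF p D0])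
  have H: "convex hull {X, Y, Z} = convex hull {A, B, C}" by (rule perm6_hull[OF p])
  have ZX: "Z \<noteq> X" using D by (auto simp: cross_def)
  then have e: "Z - X \<noteq> 0" by simp
  have glob: "perm6 A B C Y X Z"
    "\<forall>z w. g (X + refl_dir (Z - X) (z - X)) - g (X + refl_dir (Z - X) (w - X)) = l (refl_dir (Z - X) (z - w))"
    "\<forall>r u. l (refl_dir (Z - X) (of_real r * u)) = of_real r * l (refl_dir (Z - X) u)"
    "\<forall>u v. cross (l (refl_dir (Z - X) u)) (l (refl_dir (Z - X) v)) = - \<kappa> * cross u v"
    using perm6_swap[OF p] gl lh lc cross_refl2[OF e] refl_real by (auto simp: refl_diff)
  have loc: "\<exists>a b L. a > 0 \<and> b > 0 \<and> a + b = 1 \<and> fst (orbit A B C t (Suc k)) = a *\<^sub>R X + b *\<^sub>R Z \<and>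
        mu Y X Z (snd (orbit A B C t (Suc k))) > 0 \<and> l (refl_dir (Z - X) (snd (orbit A B C t (Suc k)))) = dir0 A B C t \<and>
        L > 0 \<and> g (X + refl_dir (Z - X) (fst (orbit A B C t (Suc k)) - X)) = A + of_real L * dir0 A B C t" if t: "t \<in> I" for t
  proof -
    obtain P d where Pd: "orbit A B C t k = (P, d)" by fastforce
    have "\<exists>a b L. a > 0 \<and> b > 0 \<and> a + b = 1 \<and> fst (orbit A B C t k) = a *\<^sub>R Y + b *\<^sub>R Z \<and>
        mu X Y Z (snd (orbit A B C t k)) > 0 \<and> l (snd (orbit A B C t k)) = dir0 A B C t \<and>
        L > 0 \<and> g (fst (orbit A B C t k)) = A + of_real L * dir0 A B C t"
      using iv t unfolding binv_def by blast
    then obtain a b L where ab: "a > 0" "b > 0" "a + b = 1" and P: "P = a *\<^sub>R Y + b *\<^sub>R Z"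
      and m: "mu X Y Z d > 0" and ld: "l d = dir0 A B C t" and L: "L > 0" and gP: "g P = A + of_real L * dir0 A B C t"
      unfolding Pd by auto
    have "cross (snd (orbit A B C t k)) (X - fst (orbit A B C t k)) / cross (Y - X) (Z - X) > 0" using pos t by blast
    then have ps: "cross d (X - P) / cross (Y - X) (Z - X) > 0" unfolding Pd by simp
    note ec = exit_case[OF D H ab P m ps]
    define s where "s = exit_time A B C P d"
    obtain a' b' where ab': "a' > 0" "b' > 0" "a' + b' = 1" and Q: "P + of_real s * d = a' *\<^sub>R X + b' *\<^sub>R Z"
      using ec(2) s_def by blast
    have sd: "refl_dir (side_dir A B C (P + of_real s * d)) = refl_dir (Z - X)"
      using side_refl[OF D0 p ab' Q] .
    have orb: "orbit A B C t (Suc k) = (P + of_real s * d, refl_dir (Z - X) d)"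
      unfolding orbit_Suc Pd bstep_eq s_def[symmetric] sd ..
    have m': "mu Y X Z (refl_dir (Z - X) d) > 0" using mu_refl[OF ZX] ec(3) by simp
    have a': "a' = 1 - b'" using ab'(3) by simp
    have "P + of_real s * d - X = of_real b' * (Z - X)" unfolding Q a'
      by (simp add: scaleR_conv_of_real algebra_simps)
    then have "refl_dir (Z - X) (P + of_real s * d - X) = P + of_real s * d - X"
      using refl_fix[OF e, of b'] by simp
    then have fx: "X + refl_dir (Z - X) (P + of_real s * d - X) = P + of_real s * d" by simp
    have "g (P + of_real s * d) = g P + l (of_real s * d)" using gl by (metis add_diff_cancel_left' diff_add_cancel)
    also have "\<dots> = A + of_real (L + s) * dir0 A B C t" using lh gP ld by (simp add: algebra_simps)
    finally have gQ: "g (P + of_real s * d) = A + of_real (L + s) * dir0 A B C t" .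
    have Ls: "L + s > 0" using L ec(1) s_def by simp
    have ld': "l (refl_dir (Z - X) (snd (orbit A B C t (Suc k)))) = dir0 A B C t"
      unfolding orb using refl_refl[OF e] ld by simp
    show ?thesis
      apply (rule exI[of _ a'], rule exI[of _ b'], rule exI[of _ "L + s"])
      unfolding orb fst_conv snd_conv using ab' Q m' ld' Ls fx gQ unfolding orb by simp
  qed
  show ?thesis unfolding binv_def using glob loc k0 by auto
qed


lemma mu_swap: "mu X Z Y d = mu X Y Z d"
proof -
  have 1: "cross (Y - Z) d = - cross (Z - Y) d" by (simp add: cross_def algebra_simps)
  have 2: "cross (Z - X) (Y - X) = - cross (Y - X) (Z - X)" by (simp add: cross_def)
  show ?thesis unfolding mu_def 1 2 by simp
qed

lemma inv_swap:
  assumes "binv A B C I k X Y Z g l \<kappa>" shows "binv A B C I k X Z Y g l \<kappa>"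
proof -
  have sw: "\<exists>a b L. a > 0 \<and> b > 0 \<and> a + b = 1 \<and> fst (orbit A B C t k) = a *\<^sub>R Z + b *\<^sub>R Y \<and>
        mu X Z Y (snd (orbit A B C t k)) > 0 \<and> l (snd (orbit A B C t k)) = dir0 A B C t \<and>
        L > 0 \<and> g (fst (orbit A B C t k)) = A + of_real L * dir0 A B C t" if t: "t \<in> I" for t
  proof -
    obtain a b L where h: "a > 0 \<and> b > 0 \<and> a + b = 1 \<and> fst (orbit A B C t k) = a *\<^sub>R Y + b *\<^sub>R Z \<and>
        mu X Y Z (snd (orbit A B C t k)) > 0 \<and> l (snd (orbit A B C t k)) = dir0 A B C t \<and>
        L > 0 \<and> g (fst (orbit A B C t k)) = A + of_real L * dir0 A B C t"
      using assms t unfolding binv_def by blast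
    have 1: "fst (orbit A B C t k) = b *\<^sub>R Z + a *\<^sub>R Y" using h by (simp add: add.commute)
    have 2: "mu X Z Y (snd (orbit A B C t k)) > 0" using h mu_swap by simp
    have 3: "b + a = 1" using h by simp
    show ?thesis using h 1 2 3 by blast
  qed
  show ?thesis using assms perm6_swap2 sw unfolding binv_def by blast
qed

lemma g_step:
  assumes gl: "\<forall>z w. g z - g w = l (z - w)" and lh: "\<forall>r u. l (of_real r * u) = of_real r * l u"
    and gP: "g P = A + of_real L * D0" and ld: "l d = D0"
  shows "g (P + of_real s * d) = A + of_real (L + s) * D0"
proof -
  have "g (P + of_real s * d) = g P + l (of_real s * d)" using gl by (metis add_diff_cancel_left' diff_add_cancel)
  also have "\<dots> = A + of_real (L + s) * D0" using lh gP ld by (simp add: algebra_simps)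
  finally show ?thesis .
qed

lemma F_rel:
  assumes gl: "\<forall>z w. g z - g w = l (z - w)" and lc: "\<forall>u v. cross (l u) (l v) = \<kappa> * cross u v"
    and gP: "g P = A + of_real L * D0" and ld: "l d = D0"
  shows "cross D0 (g X - A) = \<kappa> * cross d (X - P)"
proof -
  have "g X - g P = l (X - P)" using gl by blast
  then have "g X = l (X - P) + g P" by (simp add: algebra_simps)
  then have "g X - A = l (X - P) + of_real L * D0" unfolding gP by simp
  then have "cross D0 (g X - A) = cross D0 (l (X - P))" by (simp add: cross_def algebra_simps)
  also have "\<dots> = \<kappa> * cross d (X - P)" using lc ld by metis
  finally show ?thesis .
qed

lemma dir0_cross: "cross (dir0 A B C t) W = cross (B - A) W + t * cross (C - B) W"
  unfolding dir0_def by (simp add: cross_def algebra_simps)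

lemma dir0_nz: assumes D: "cross (B - A) (C - A) \<noteq> 0" shows "dir0 A B C t \<noteq> 0"
proof
  assume z: "dir0 A B C t = 0"
  have "cross (B - A) (dir0 A B C t) = t * cross (B - A) (C - A)" unfolding dir0_def by (simp add: cross_def algebra_simps)
  then have "t = 0" using z D by (simp add: cross_def)
  have "cross (C - A) (dir0 A B C t) = (t - 1) * cross (B - A) (C - A)" unfolding dir0_def by (simp add: cross_def algebra_simps)
  then have "t = 1" using z D by (simp add: cross_def)
  then show False using \<open>t = 0\<close> by simp
qed

lemma cross_both_zero:
  assumes D: "cross U V \<noteq> 0" and "cross U W = 0" "cross V W = 0" shows "W = 0"
proof -
  have e1: "Re U * Im W = Im U * Re W" "Re V * Im W = Im V * Re W" using assms(2,3) by (simp_all add: cross_def)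
  have "Re W * cross U V = Re U * (Im V * Re W) - Re V * (Im U * Re W)" by (simp add: cross_def algebra_simps)
  also have "\<dots> = Re U * (Re V * Im W) - Re V * (Re U * Im W)" using e1 by simp
  also have "\<dots> = 0" by simp
  finally have r: "Re W * cross U V = 0" .
  have "Im W * cross U V = Im V * (Re U * Im W) - Im U * (Re V * Im W)" by (simp add: cross_def algebra_simps)
  also have "\<dots> = Im V * (Im U * Re W) - Im U * (Im V * Re W)" using e1 by simp
  also have "\<dots> = 0" by simp
  finally have i: "Im W * cross U V = 0" .
  show ?thesis using D r i by (simp add: complex_eq_iff)
qed

lemma affine_root:
  fixes p q u v :: real
  assumes "(p + q * u) * (p + q * v) < 0"
  shows "\<exists>w. min u v \<le> w \<and> w \<le> max u v \<and> p + q * w = 0"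
proof -
  have q: "q \<noteq> 0" using assms by (auto simp: mult_less_0_iff)
  define w where "w = - p / q"
  have pw: "p + q * w = 0" using q unfolding w_def by simp
  have "p + q * u = q * (u - w)" "p + q * v = q * (v - w)" using pw by (simp_all add: algebra_simps)
  then have "(q * (u - w)) * (q * (v - w)) < 0" using assms by simp
  then have "(q * q) * ((u - w) * (v - w)) < 0" by (simp add: ac_simps)
  moreover have "q * q > 0" using q not_real_square_gt_zero by blast
  ultimately have "(u - w) * (v - w) < 0" by (simp add: mult_less_0_iff)
  then have "min u v \<le> w \<and> w \<le> max u v" by (auto simp: mult_less_0_iff)
  then show ?thesis using pw by blast
qed


lemma inv_get:
  assumes "binv A B C I k X Y Z g l \<kappa>" "t \<in> I"
  obtains a b L where "a > 0" "b > 0" "a + b = 1" "fst (orbit A B C t k) = a *\<^sub>R Y + b *\<^sub>R Z"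
    "mu X Y Z (snd (orbit A B C t k)) > 0" "l (snd (orbit A B C t k)) = dir0 A B C t"
    "L > 0" "g (fst (orbit A B C t k)) = A + of_real L * dir0 A B C t"
  using assms unfolding binv_def by blast

lemma inv_c_nz:
  assumes D0: "cross (B - A) (C - A) \<noteq> 0" and iv: "binv A B C I k X Y Z g l \<kappa>" and t: "t \<in> I"
    and nv: "fst (orbit A B C t (Suc k)) \<notin> {A, B, C}"
  shows "cross (snd (orbit A B C t k)) (X - fst (orbit A B C t k)) \<noteq> 0"
proof
  assume z: "cross (snd (orbit A B C t k)) (X - fst (orbit A B C t k)) = 0"
  have p: "perm6 A B C X Y Z" using iv unfolding binv_def by blast
  have D: "cross (Y - X) (Z - X) \<noteq> 0" by (rule perm6_D[OF p D0])
  have H: "convex hull {X, Y, Z} = convex hull {A, B, C}" by (rule perm6_hull[OF p])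
  obtain P d where Pd: "orbit A B C t k = (P, d)" by fastforce
  obtain a b L where ab0: "a > 0" "b > 0" "a + b = 1" "fst (orbit A B C t k) = a *\<^sub>R Y + b *\<^sub>R Z"
    "mu X Y Z (snd (orbit A B C t k)) > 0" by (rule inv_get[OF iv t])
  have ab: "a > 0" "b > 0" "a + b = 1" "P = a *\<^sub>R Y + b *\<^sub>R Z" "mu X Y Z d > 0"
    using ab0 unfolding Pd by auto
  have "P + of_real (exit_time A B C P d) * d = X" using exit_vertex(2)[OF D H ab] z unfolding Pd by simp
  then have "fst (orbit A B C t (Suc k)) = X" unfolding orbit_Suc Pd bstep_eq by simp
  then show False using nv perm6_set[OF p] by auto
qed

lemma inv_F:
  assumes iv: "binv A B C I k X Y Z g l \<kappa>" and t: "t \<in> I"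
  shows "cross (dir0 A B C t) (g X - A) = \<kappa> * cross (snd (orbit A B C t k)) (X - fst (orbit A B C t k))"
proof -
  have gl: "\<forall>z w. g z - g w = l (z - w)" and lc: "\<forall>u v. cross (l u) (l v) = \<kappa> * cross u v"
    using iv unfolding binv_def by auto
  obtain a b L where "l (snd (orbit A B C t k)) = dir0 A B C t" "g (fst (orbit A B C t k)) = A + of_real L * dir0 A B C t"
    using inv_get[OF iv t] by metis
  then show ?thesis using F_rel[OF gl lc] by blast
qed

lemma inv_step:
  assumes D0: "cross (B - A) (C - A) \<noteq> 0" and iv: "binv A B C I k X Y Z g l \<kappa>" and I: "I = {t1..t2}"
    and nv: "\<forall>t\<in>I. fst (orbit A B C t (Suc k)) \<notin> {A, B, C}"
  shows "\<exists>X' Y' Z' g' l' \<kappa>'. binv A B C I (Suc k) X' Y' Z' g' l' \<kappa>'"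
proof -
  have p: "perm6 A B C X Y Z" and k0: "\<kappa> \<noteq> 0" using iv unfolding binv_def by auto
  have D: "cross (Y - X) (Z - X) \<noteq> 0" by (rule perm6_D[OF p D0])
  define DD where "DD = cross (Y - X) (Z - X)"
  define c where "c t = cross (snd (orbit A B C t k)) (X - fst (orbit A B C t k)) / DD" for t
  define W where "W = g X - A"
  have cnz: "c t \<noteq> 0" if "t \<in> I" for t
    using inv_c_nz[OF D0 iv that] nv that D unfolding c_def DD_def by auto
  have Fc: "cross (B - A) W + t * cross (C - B) W = (\<kappa> * DD) * c t" if "t \<in> I" for t
    using inv_F[OF iv that] D unfolding W_def c_def DD_def dir0_cross by simp
  have kD: "\<kappa> * DD \<noteq> 0" using k0 D unfolding DD_def by simp
  have nomix: False if u: "u \<in> I" "c u > 0" and v: "v \<in> I" "c v < 0" for u v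
  proof -
    have "c u * c v < 0" using u v by (simp add: mult_pos_neg)
    moreover have "(\<kappa> * DD) * (\<kappa> * DD) > 0" using kD not_real_square_gt_zero by blast
    ultimately have "((\<kappa> * DD) * (\<kappa> * DD)) * (c u * c v) < 0" by (simp add: mult_pos_neg)
    then have "(cross (B - A) W + u * cross (C - B) W) * (cross (B - A) W + v * cross (C - B) W) < 0"
      unfolding Fc[OF u(1)] Fc[OF v(1)] by (simp add: ac_simps)
    then have "(cross (B - A) W + cross (C - B) W * u) * (cross (B - A) W + cross (C - B) W * v) < 0"
      by (simp add: mult.commute)
    then obtain w where w: "min u v \<le> w" "w \<le> max u v" "cross (B - A) W + cross (C - B) W * w = 0"
      using affine_root by blast
    have "w \<in> I" using w u(1) v(1) unfolding I by auto
    then have "c w = 0" using Fc[of w] w(3) kD by (simp add: mult.commute)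
    then show False using cnz \<open>w \<in> I\<close> by blast
  qed
  have "(\<forall>t\<in>I. c t > 0) \<or> (\<forall>t\<in>I. c t < 0)"
  proof (rule ccontr)
    assume "\<not> ?thesis"
    then obtain u v where "u \<in> I" "\<not> c u > 0" "v \<in> I" "\<not> c v < 0" by blast
    then have "c u < 0" "c v > 0" using cnz by force+
    then show False using nomix \<open>u \<in> I\<close> \<open>v \<in> I\<close> by blast
  qed
  then show ?thesis
  proof
    assume "\<forall>t\<in>I. c t > 0"
    then have "\<forall>t\<in>I. cross (snd (orbit A B C t k)) (X - fst (orbit A B C t k)) / cross (Y - X) (Z - X) > 0"
      unfolding c_def DD_def .
    then show ?thesis using inv_step_case[OF D0 iv] by blast
  next
    assume "\<forall>t\<in>I. c t < 0"
    then have "\<forall>t\<in>I. cross (snd (orbit A B C t k)) (X - fst (orbit A B C t k)) / cross (Z - X) (Y - X) > 0"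
      unfolding c_def DD_def cross_anti[of "Y - X" "Z - X"] by simp
    then show ?thesis using inv_step_case[OF D0 inv_swap[OF iv]] by blast
  qed
qed


lemma vertex_zero:
  assumes D0: "cross (B - A) (C - A) \<noteq> 0" and iv: "binv A B C I k X Y Z g l \<kappa>" and t: "t \<in> I"
    and vx: "fst (orbit A B C t (Suc k)) \<in> {A, B, C}"
  shows "cross (snd (orbit A B C t k)) (X - fst (orbit A B C t k)) = 0"
proof (rule ccontr)
  assume nz: "cross (snd (orbit A B C t k)) (X - fst (orbit A B C t k)) \<noteq> 0"
  have p: "perm6 A B C X Y Z" using iv unfolding binv_def by blast
  have D: "cross (Y - X) (Z - X) \<noteq> 0" by (rule perm6_D[OF p D0])
  have H: "convex hull {X, Y, Z} = convex hull {A, B, C}" by (rule perm6_hull[OF p])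
  have D': "cross (Z - X) (Y - X) \<noteq> 0" using D cross_anti[of "Y - X" "Z - X"] by simp
  have H': "convex hull {X, Z, Y} = convex hull {A, B, C}" using H by (simp add: insert_commute)
  obtain P d where Pd: "orbit A B C t k = (P, d)" by fastforce
  obtain a b L where ab0: "a > 0" "b > 0" "a + b = 1" "fst (orbit A B C t k) = a *\<^sub>R Y + b *\<^sub>R Z"
    "mu X Y Z (snd (orbit A B C t k)) > 0" by (rule inv_get[OF iv t])
  have ab: "a > 0" "b > 0" "a + b = 1" "P = a *\<^sub>R Y + b *\<^sub>R Z" "mu X Y Z d > 0"
    using ab0 unfolding Pd by auto
  have Qdef: "fst (orbit A B C t (Suc k)) = P + of_real (exit_time A B C P d) * d"
    unfolding orbit_Suc Pd bstep_eq by simp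
  have nz': "cross d (X - P) \<noteq> 0" using nz unfolding Pd by simp
  consider "cross d (X - P) / cross (Y - X) (Z - X) > 0" | "cross d (X - P) / cross (Z - X) (Y - X) > 0"
    using nz' D cross_anti[of "Y - X" "Z - X"]
    by (metis divide_eq_0_iff linorder_neqE_linordered_idom minus_divide_right neg_0_less_iff_less)
  then show False
  proof cases
    case 1
    obtain a' b' where "a' > 0" "b' > 0" "a' + b' = 1" "P + of_real (exit_time A B C P d) * d = a' *\<^sub>R X + b' *\<^sub>R Z"
      using exit_case(2)[OF D H ab 1] by blast
    then have "fst (orbit A B C t (Suc k)) \<notin> {X, Y, Z}" using not_vertex[OF D] Qdef by simp
    then show False using vx perm6_set[OF p] by simp
  next
    case 2
    have ab2: "b > 0" "a > 0" "b + a = 1" "P = b *\<^sub>R Z + a *\<^sub>R Y" "mu X Z Y d > 0"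
      using ab mu_swap by (auto simp: add.commute)
    obtain a' b' where "a' > 0" "b' > 0" "a' + b' = 1" "P + of_real (exit_time A B C P d) * d = a' *\<^sub>R X + b' *\<^sub>R Y"
      using exit_case(2)[OF D' H' ab2 2] by blast
    then have "fst (orbit A B C t (Suc k)) \<notin> {X, Z, Y}" using not_vertex[OF D'] Qdef by simp
    then show False using vx perm6_set[OF p] by auto
  qed
qed

lemma inv_final:
  assumes D0: "cross (B - A) (C - A) \<noteq> 0" and iv: "binv A B C I k X Y Z g l \<kappa>"
    and t: "t1 \<in> I" "t2 \<in> I" "t1 \<noteq> t2"
    and v: "fst (orbit A B C t1 (Suc k)) \<in> {A, B, C}" "fst (orbit A B C t2 (Suc k)) \<in> {A, B, C}"
  shows False
proof -
  have p: "perm6 A B C X Y Z" and gl: "\<forall>z w. g z - g w = l (z - w)"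
    and lh: "\<forall>r u. l (of_real r * u) = of_real r * l u" using iv unfolding binv_def by auto
  have D: "cross (Y - X) (Z - X) \<noteq> 0" by (rule perm6_D[OF p D0])
  have H: "convex hull {X, Y, Z} = convex hull {A, B, C}" by (rule perm6_hull[OF p])
  define W where "W = g X - A"
  have F0: "cross (B - A) W + t * cross (C - B) W = 0" if "t \<in> I" "fst (orbit A B C t (Suc k)) \<in> {A, B, C}" for t
    using inv_F[OF iv that(1)] vertex_zero[OF D0 iv that] unfolding W_def dir0_cross by simp
  have e: "(t1 - t2) * cross (C - B) W = (cross (B - A) W + t1 * cross (C - B) W) - (cross (B - A) W + t2 * cross (C - B) W)"
    by (simp add: algebra_simps)
  have "(t1 - t2) * cross (C - B) W = 0" unfolding e using F0[OF t(1) v(1)] F0[OF t(2) v(2)] by simp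
  then have q: "cross (C - B) W = 0" using t(3) by simp
  then have p0: "cross (B - A) W = 0" using F0[OF t(1) v(1)] by simp
  have "cross (C - A) W = cross (B - A) W + cross (C - B) W" by (simp add: cross_def algebra_simps)
  then have "cross (C - A) W = 0" using q p0 by simp
  then have W0: "W = 0" using cross_both_zero[OF D0 p0] by simp
  obtain P d where Pd: "orbit A B C t1 k = (P, d)" by fastforce
  obtain a b L where ab0: "a > 0" "b > 0" "a + b = 1" "fst (orbit A B C t1 k) = a *\<^sub>R Y + b *\<^sub>R Z"
    "mu X Y Z (snd (orbit A B C t1 k)) > 0" "l (snd (orbit A B C t1 k)) = dir0 A B C t1"
    "L > 0" "g (fst (orbit A B C t1 k)) = A + of_real L * dir0 A B C t1" by (rule inv_get[OF iv t(1)])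
  have ab: "a > 0" "b > 0" "a + b = 1" "P = a *\<^sub>R Y + b *\<^sub>R Z" "mu X Y Z d > 0"
    and ld: "l d = dir0 A B C t1" and gP: "g P = A + of_real L * dir0 A B C t1"
    using ab0 unfolding Pd by auto
  have z: "cross d (X - P) = 0" using vertex_zero[OF D0 iv t(1) v(1)] unfolding Pd by simp
  note ev = exit_vertex[OF D H ab z]
  have "g X = A + of_real (L + exit_time A B C P d) * dir0 A B C t1"
    using g_step[OF gl lh gP ld, of "exit_time A B C P d"] unfolding ev(2) .
  then have "of_real (L + exit_time A B C P d) * dir0 A B C t1 = 0" using W0 unfolding W_def by simp
  moreover have "L + exit_time A B C P d > 0" using ab0(7) ev(1) by simp
  ultimately show False using dir0_nz[OF D0, of t1] by (metis mult_eq_0_iff of_real_eq_0_iff less_irrefl)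
qed


lemma orbit1:
  assumes D0: "cross (B - A) (C - A) \<noteq> 0" "0 \<le> t" "t \<le> 1"
  shows "fst (orbit A B C t 1) = A + dir0 A B C t"
proof -
  have ex: "exit_time A B C A (dir0 A B C t) = 1" using step0_exit[OF assms] .
  show ?thesis using orbit_Suc[of A B C t 0] unfolding orbit_0 bstep_eq ex by simp
qed

lemma two_index:
  assumes D0: "cross (B - A) (C - A) \<noteq> 0" and lt: "t1 < t2"
    and h1: "has_index A B C t1 (Suc m)" and h2: "has_index A B C t2 (Suc m)"
  shows "\<exists>w. t1 < w \<and> w < t2 \<and> w \<in> cut_pts A B C m"
proof (rule ccontr)
  assume no: "\<not> ?thesis"
  define I where "I = {t1..t2}"
  have r1: "0 \<le> t1" "t1 \<le> 1" and v1: "fst (orbit A B C t1 (Suc (Suc m))) \<in> {A, B, C}"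
    and n1: "\<forall>j<Suc m. fst (orbit A B C t1 (Suc j)) \<notin> {A, B, C}" using h1 unfolding has_index_def by auto
  have r2: "0 \<le> t2" "t2 \<le> 1" and v2: "fst (orbit A B C t2 (Suc (Suc m))) \<in> {A, B, C}"
    and n2: "\<forall>j<Suc m. fst (orbit A B C t2 (Suc j)) \<notin> {A, B, C}" using h2 unfolding has_index_def by auto
  have nvx: "fst (orbit A B C t (Suc j)) \<notin> {A, B, C}" if t: "t \<in> I" and j: "j \<le> m" for t j
  proof
    assume vx: "fst (orbit A B C t (Suc j)) \<in> {A, B, C}"
    have "t \<noteq> t1" using n1 j vx by auto
    moreover have "t \<noteq> t2" using n2 j vx by auto
    ultimately have tt: "t1 < t" "t < t2" using t unfolding I_def by auto
    obtain j0 where j0: "fst (orbit A B C t (Suc j0)) \<in> {A, B, C}" "\<forall>i<j0. fst (orbit A B C t (Suc i)) \<notin> {A, B, C}"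
      using vx exists_least_iff[of "\<lambda>i. fst (orbit A B C t (Suc i)) \<in> {A, B, C}"] by blast
    have "j0 \<le> j" using j0(2) vx by (meson not_le)
    have "has_index A B C t j0" unfolding has_index_def using j0 tt r1 r2 by auto
    moreover have "j0 \<le> m" using \<open>j0 \<le> j\<close> j by simp
    ultimately have "t \<in> cut_pts A B C m" unfolding cut_pts_def by blast
    then show False using no tt by blast
  qed
  have "t1 \<noteq> 0"
  proof
    assume "t1 = 0"
    then have "fst (orbit A B C t1 1) = B" using orbit1[OF D0, of 0] unfolding dir0_def by simp
    then show False using n1 by (metis One_nat_def insertCI zero_less_Suc)
  qed
  have "t2 \<noteq> 1"
  proof
    assume "t2 = 1"
    then have "fst (orbit A B C t2 1) = C" using orbit1[OF D0, of 1] unfolding dir0_def by simp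
    then show False using n2 by (metis One_nat_def insertCI zero_less_Suc)
  qed
  have Isub: "I \<subseteq> {0<..<1}" using r1 r2 \<open>t1 \<noteq> 0\<close> \<open>t2 \<noteq> 1\<close> unfolding I_def by auto
  have ind: "1 \<le> k \<longrightarrow> k \<le> Suc m \<longrightarrow> (\<exists>X Y Z g l \<kappa>. binv A B C I k X Y Z g l \<kappa>)" for k
  proof (induction k)
    case 0 then show ?case by simp
  next
    case (Suc k)
    show ?case
    proof (cases "k = 0")
      case True
      have "binv A B C I (Suc k) A B C (\<lambda>z. B + refl_dir (C - B) (z - B)) (refl_dir (C - B)) (-1)"
        using inv_base[OF D0 Isub] True by simp
      then show ?thesis by blast
    next
      case False
      show ?thesis
      proof (intro impI)
        assume "Suc k \<le> Suc m"
        then obtain X Y Z g l \<kappa> where iv: "binv A B C I k X Y Z g l \<kappa>" using Suc.IH False by auto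
        have "\<forall>t\<in>I. fst (orbit A B C t (Suc k)) \<notin> {A, B, C}" using nvx \<open>Suc k \<le> Suc m\<close> by auto
        then show "\<exists>X Y Z g l \<kappa>. binv A B C I (Suc k) X Y Z g l \<kappa>" using inv_step[OF D0 iv I_def] by blast
      qed
    qed
  qed
  obtain X Y Z g l \<kappa> where iv: "binv A B C I (Suc m) X Y Z g l \<kappa>" using ind[of "Suc m"] by auto
  show False using inv_final[OF D0 iv _ _ _ v1 v2] lt unfolding I_def by auto
qed


lemma index_unique: "has_index A B C t p \<Longrightarrow> has_index A B C t q \<Longrightarrow> p = q"
  unfolding has_index_def by (metis linorder_neqE_nat)

definition lev :: "complex \<Rightarrow> complex \<Rightarrow> complex \<Rightarrow> real \<Rightarrow> nat" where
  "lev A B C t = (LEAST p. has_index A B C t p)"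

lemma lev_eq: "has_index A B C t p \<Longrightarrow> lev A B C t = p"
  unfolding lev_def by (metis (mono_tags, lifting) Least_equality index_unique order_refl)

context
  fixes A B C :: complex and n c :: nat and a b :: real and S :: "real set"
  assumes D0: "cross (B - A) (C - A) \<noteq> 0"
    and J: "is_interval_of A B C n a b"
    and Sd: "S = cut_pts A B C (n + c) \<inter> {a<..<b}"
begin

lemma inS: assumes "a < w" "w < b" "has_index A B C w p" "p \<le> n + c"
  shows "w \<in> S" "lev A B C w = p" "n < p"
proof -
  show "w \<in> S" unfolding Sd cut_pts_def using assms by auto
  show "lev A B C w = p" using lev_eq assms(3) .
  show "n < p"
  proof (rule ccontr)
    assume "\<not> n < p"
    then have "p \<le> n" by simp
    then have "w \<in> cut_pts A B C n" unfolding cut_pts_def using assms(3) by blast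
    then show False using J assms(1,2) unfolding is_interval_of_def by blast
  qed
qed

lemma levS: assumes "t \<in> S"
  shows "has_index A B C t (lev A B C t)" "n < lev A B C t" "lev A B C t \<le> n + c" "a < t" "t < b"
proof -
  obtain p where p: "p \<le> n + c" "has_index A B C t p" "a < t" "t < b" using assms unfolding Sd cut_pts_def by auto
  show "has_index A B C t (lev A B C t)" using p lev_eq by metis
  show "n < lev A B C t" "lev A B C t \<le> n + c" using inS[OF p(3,4,2,1)] p by auto
  show "a < t" "t < b" using p by auto
qed

lemma between:
  assumes y: "y1 \<in> S" "y2 \<in> S" "y1 < y2" "lev A B C y1 = lev A B C y2"
  shows "\<exists>w\<in>S. y1 < w \<and> w < y2 \<and> lev A B C w < lev A B C y1"
proof -
  have h1: "has_index A B C y1 (lev A B C y1)" and L: "n < lev A B C y1" "lev A B C y1 \<le> n + c"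
    and ab1: "a < y1" using levS[OF y(1)] by auto
  have h2: "has_index A B C y2 (lev A B C y1)" and ab2: "y2 < b" using levS[OF y(2)] y(4) by auto
  obtain L' where L': "lev A B C y1 = Suc L'" using L by (cases "lev A B C y1") auto
  obtain w where w: "y1 < w" "w < y2" "w \<in> cut_pts A B C L'"
    using two_index[OF D0 y(3)] h1 h2 unfolding L' by blast
  obtain p where p: "p \<le> L'" "has_index A B C w p" using w(3) unfolding cut_pts_def by auto
  have "p \<le> n + c" using p L L' by simp
  note i = inS[OF _ _ p(2) this]
  have "w \<in> S" "lev A B C w = p" using i ab1 ab2 w by auto
  then show ?thesis using w p L' by auto
qed

lemma chain_right:
  assumes fin: "finite S"
    and ng: "\<not> (\<exists>xp\<in>S. \<exists>xq\<in>S. \<exists>xr\<in>S. \<exists>p q r. good_position A B C xp xq xr p q r)"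
  shows "u \<in> S \<Longrightarrow> (\<forall>t\<in>S. u < t \<longrightarrow> lev A B C t > lev A B C u) \<Longrightarrow> inj_on (lev A B C) (S \<inter> {u<..})"
proof (induction "card (S \<inter> {u<..})" arbitrary: u rule: less_induct)
  case less
  define R where "R = S \<inter> {u<..}"
  show ?case
  proof (cases "R = {}")
    case True then show ?thesis unfolding R_def by simp
  next
    case False
    have finR: "finite R" using fin unfolding R_def by simp
    define M where "M = Min (lev A B C ` R)"
    have "M \<in> lev A B C ` R" unfolding M_def using finR False by (intro Min_in) auto
    then obtain z where z: "z \<in> R" "lev A B C z = M" by force
    have zmin: "\<And>y. y \<in> R \<Longrightarrow> lev A B C z \<le> lev A B C y" using Min_le finR unfolding z(2) M_def by auto
    have zS: "z \<in> S" "u < z" using z unfolding R_def by auto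
    have rz: "lev A B C u < lev A B C z" using less.prems zS by auto
    have uniq: "y = z" if yR: "y \<in> R" and ye: "lev A B C y = lev A B C z" for y
    proof (rule ccontr)
      assume "y \<noteq> z"
      have yS: "y \<in> S" "u < y" using yR unfolding R_def by auto
      obtain w where w: "w \<in> S" "min y z < w" "w < max y z" "lev A B C w < lev A B C z"
      proof (cases "y < z")
        case True then show ?thesis using between[OF yS(1) zS(1) True] ye that by force
      next
        case False then have "z < y" using \<open>y \<noteq> z\<close> by simp
        then show ?thesis using between[OF zS(1) yS(1) \<open>z < y\<close>] ye that by force
      qed
      have "w \<in> R" using w yS zS unfolding R_def by auto
      then show False using zmin w(4) by fastforce
    qed
    have empty: False if w0: "w0 \<in> S" "u < w0" "w0 < z" for w0
    proof -
      define R' where "R' = S \<inter> {u<..<z}"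
      have finR': "finite R'" using fin unfolding R'_def by simp
      have neR': "R' \<noteq> {}" using w0 unfolding R'_def by auto
      define M' where "M' = Min (lev A B C ` R')"
      have "M' \<in> lev A B C ` R'" unfolding M'_def using finR' neR' by (intro Min_in) auto
      then obtain w where w: "w \<in> R'" "lev A B C w = M'" by force
      have wmin: "\<And>y. y \<in> R' \<Longrightarrow> lev A B C w \<le> lev A B C y" using Min_le finR' unfolding w(2) M'_def by auto
      have wS: "w \<in> S" "u < w" "w < z" using w unfolding R'_def by auto
      have "w \<in> R" using wS unfolding R_def by auto
      then have "lev A B C z \<le> lev A B C w" using zmin by simp
      moreover have "lev A B C w \<noteq> lev A B C z" using uniq[OF \<open>w \<in> R\<close>] wS(3) by auto
      ultimately have rw: "lev A B C z < lev A B C w" by simp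
      have gp: "good_position A B C u z w (lev A B C u) (lev A B C z) (lev A B C w)"
        unfolding good_position_def
      proof (intro conjI allI impI)
        show "has_index A B C u (lev A B C u)" using levS(1) less.prems(1) .
        show "has_index A B C z (lev A B C z)" using levS(1) zS(1) .
        show "has_index A B C w (lev A B C w)" using levS(1) wS(1) .
        show "lev A B C u < lev A B C z" by (rule rz)
        show "lev A B C z < lev A B C w" by (rule rw)
        show "strictly_between u z w" unfolding strictly_between_def using wS zS by auto
        fix w' assume h: "strictly_between u z w' \<and> w' \<in> cut_pts A B C (lev A B C w)"
        then have w'b: "u < w'" "w' < z" using zS unfolding strictly_between_def by auto
        obtain p where p: "p \<le> lev A B C w" "has_index A B C w' p" using h unfolding cut_pts_def by auto
        have "p \<le> n + c" using p(1) levS(3)[OF wS(1)] by simp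
        moreover have "a < w'" "w' < b" using w'b levS(4)[OF less.prems(1)] levS(5)[OF zS(1)] by auto
        ultimately have w'S: "w' \<in> S" "lev A B C w' = p" using inS p(2) by auto
        then have "w' \<in> R'" using w'b unfolding R'_def by auto
        then have eq: "lev A B C w' = lev A B C w" using wmin p(1) w'S(2) by fastforce
        show "w' = w"
        proof (rule ccontr)
          assume ne: "w' \<noteq> w"
          obtain v where v: "v \<in> S" "min w w' < v" "v < max w w'" "lev A B C v < lev A B C w"
          proof (cases "w < w'")
            case True then show ?thesis using between[OF wS(1) w'S(1) True] eq that by force
          next
            case False then have "w' < w" using ne by simp
            then show ?thesis using between[OF w'S(1) wS(1) \<open>w' < w\<close>] eq that by force
          qed
          have "v \<in> R'" using v wS w'b unfolding R'_def by auto
          then show False using wmin v(4) by fastforce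
        qed
      qed
      then show False using ng less.prems(1) zS(1) wS(1) by blast
    qed
    have Rz: "R = insert z (S \<inter> {z<..})"
    proof
      show "R \<subseteq> insert z (S \<inter> {z<..})"
      proof
        fix y assume y: "y \<in> R"
        then have "y \<in> S" "u < y" unfolding R_def by auto
        then have "\<not> y < z" using empty by blast
        then show "y \<in> insert z (S \<inter> {z<..})" using \<open>y \<in> S\<close> by auto
      qed
      show "insert z (S \<inter> {z<..}) \<subseteq> R" using z zS unfolding R_def by auto
    qed
    have lt: "card (S \<inter> {z<..}) < card (S \<inter> {u<..})"
    proof -
      have "card R = Suc (card (S \<inter> {z<..}))" unfolding Rz using fin by simp
      then show ?thesis unfolding R_def by simp
    qed
    have gt: "\<forall>t\<in>S. z < t \<longrightarrow> lev A B C z < lev A B C t"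
    proof (intro ballI impI)
      fix t assume t: "t \<in> S" "z < t"
      then have "t \<in> R" using zS unfolding R_def by auto
      then have "lev A B C z \<le> lev A B C t" "lev A B C t \<noteq> lev A B C z \<or> t = z" using zmin uniq by auto
      then show "lev A B C z < lev A B C t" using t by auto
    qed
    have ih: "inj_on (lev A B C) (S \<inter> {z<..})" using less.hyps[OF lt zS(1) gt] .
    have "lev A B C z \<notin> lev A B C ` (S \<inter> {z<..})" using gt by auto
    then show ?thesis using ih unfolding R_def[symmetric] Rz by simp
  qed
qed

lemma chain_left:
  assumes fin: "finite S"
    and ng: "\<not> (\<exists>xp\<in>S. \<exists>xq\<in>S. \<exists>xr\<in>S. \<exists>p q r. good_position A B C xp xq xr p q r)"
  shows "u \<in> S \<Longrightarrow> (\<forall>t\<in>S. t < u \<longrightarrow> lev A B C t > lev A B C u) \<Longrightarrow> inj_on (lev A B C) (S \<inter> {..<u})"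
proof (induction "card (S \<inter> {..<u})" arbitrary: u rule: less_induct)
  case less
  define R where "R = S \<inter> {..<u}"
  show ?case
  proof (cases "R = {}")
    case True then show ?thesis unfolding R_def by simp
  next
    case False
    have finR: "finite R" using fin unfolding R_def by simp
    define M where "M = Min (lev A B C ` R)"
    have "M \<in> lev A B C ` R" unfolding M_def using finR False by (intro Min_in) auto
    then obtain z where z: "z \<in> R" "lev A B C z = M" by force
    have zmin: "\<And>y. y \<in> R \<Longrightarrow> lev A B C z \<le> lev A B C y" using Min_le finR unfolding z(2) M_def by auto
    have zS: "z \<in> S" "z < u" using z unfolding R_def by auto
    have rz: "lev A B C u < lev A B C z" using less.prems zS by auto
    have uniq: "y = z" if yR: "y \<in> R" and ye: "lev A B C y = lev A B C z" for y
    proof (rule ccontr)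
      assume "y \<noteq> z"
      have yS: "y \<in> S" "y < u" using yR unfolding R_def by auto
      obtain w where w: "w \<in> S" "min y z < w" "w < max y z" "lev A B C w < lev A B C z"
      proof (cases "y < z")
        case True then show ?thesis using between[OF yS(1) zS(1) True] ye that by force
      next
        case False then have "z < y" using \<open>y \<noteq> z\<close> by simp
        then show ?thesis using between[OF zS(1) yS(1) \<open>z < y\<close>] ye that by force
      qed
      have "w \<in> R" using w yS zS unfolding R_def by auto
      then show False using zmin w(4) by fastforce
    qed
    have empty: False if w0: "w0 \<in> S" "z < w0" "w0 < u" for w0
    proof -
      define R' where "R' = S \<inter> {z<..<u}"
      have finR': "finite R'" using fin unfolding R'_def by simp
      have neR': "R' \<noteq> {}" using w0 unfolding R'_def by auto
      define M' where "M' = Min (lev A B C ` R')"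
      have "M' \<in> lev A B C ` R'" unfolding M'_def using finR' neR' by (intro Min_in) auto
      then obtain w where w: "w \<in> R'" "lev A B C w = M'" by force
      have wmin: "\<And>y. y \<in> R' \<Longrightarrow> lev A B C w \<le> lev A B C y" using Min_le finR' unfolding w(2) M'_def by auto
      have wS: "w \<in> S" "z < w" "w < u" using w unfolding R'_def by auto
      have "w \<in> R" using wS unfolding R_def by auto
      then have "lev A B C z \<le> lev A B C w" using zmin by simp
      moreover have "lev A B C w \<noteq> lev A B C z" using uniq[OF \<open>w \<in> R\<close>] wS(2) by auto
      ultimately have rw: "lev A B C z < lev A B C w" by simp
      have gp: "good_position A B C u z w (lev A B C u) (lev A B C z) (lev A B C w)"
        unfolding good_position_def
      proof (intro conjI allI impI)
        show "has_index A B C u (lev A B C u)" using levS(1) less.prems(1) .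
        show "has_index A B C z (lev A B C z)" using levS(1) zS(1) .
        show "has_index A B C w (lev A B C w)" using levS(1) wS(1) .
        show "lev A B C u < lev A B C z" by (rule rz)
        show "lev A B C z < lev A B C w" by (rule rw)
        show "strictly_between u z w" unfolding strictly_between_def using wS zS by auto
        fix w' assume h: "strictly_between u z w' \<and> w' \<in> cut_pts A B C (lev A B C w)"
        then have w'b: "z < w'" "w' < u" using zS unfolding strictly_between_def by auto
        obtain p where p: "p \<le> lev A B C w" "has_index A B C w' p" using h unfolding cut_pts_def by auto
        have "p \<le> n + c" using p(1) levS(3)[OF wS(1)] by simp
        moreover have "a < w'" "w' < b" using w'b levS(4)[OF zS(1)] levS(5)[OF less.prems(1)] by auto
        ultimately have w'S: "w' \<in> S" "lev A B C w' = p" using inS p(2) by auto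
        then have "w' \<in> R'" using w'b unfolding R'_def by auto
        then have eq: "lev A B C w' = lev A B C w" using wmin p(1) w'S(2) by fastforce
        show "w' = w"
        proof (rule ccontr)
          assume ne: "w' \<noteq> w"
          obtain v where v: "v \<in> S" "min w w' < v" "v < max w w'" "lev A B C v < lev A B C w"
          proof (cases "w < w'")
            case True then show ?thesis using between[OF wS(1) w'S(1) True] eq that by force
          next
            case False then have "w' < w" using ne by simp
            then show ?thesis using between[OF w'S(1) wS(1) \<open>w' < w\<close>] eq that by force
          qed
          have "v \<in> R'" using v wS w'b unfolding R'_def by auto
          then show False using wmin v(4) by fastforce
        qed
      qed
      then show False using ng less.prems(1) zS(1) wS(1) by blast
    qed
    have Rz: "R = insert z (S \<inter> {..<z})"
    proof
      show "R \<subseteq> insert z (S \<inter> {..<z})"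
      proof
        fix y assume y: "y \<in> R"
        then have "y \<in> S" "y < u" unfolding R_def by auto
        then have "\<not> z < y" using empty by blast
        then show "y \<in> insert z (S \<inter> {..<z})" using \<open>y \<in> S\<close> by auto
      qed
      show "insert z (S \<inter> {..<z}) \<subseteq> R" using z zS unfolding R_def by auto
    qed
    have lt: "card (S \<inter> {..<z}) < card (S \<inter> {..<u})"
    proof -
      have "card R = Suc (card (S \<inter> {..<z}))" unfolding Rz using fin by simp
      then show ?thesis unfolding R_def by simp
    qed
    have gt: "\<forall>t\<in>S. t < z \<longrightarrow> lev A B C z < lev A B C t"
    proof (intro ballI impI)
      fix t assume t: "t \<in> S" "t < z"
      then have "t \<in> R" using zS unfolding R_def by auto
      then have "lev A B C z \<le> lev A B C t" "lev A B C t \<noteq> lev A B C z \<or> t = z" using zmin uniq by auto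
      then show "lev A B C z < lev A B C t" using t by auto
    qed
    have ih: "inj_on (lev A B C) (S \<inter> {..<z})" using less.hyps[OF lt zS(1) gt] .
    have "lev A B C z \<notin> lev A B C ` (S \<inter> {..<z})" using gt by auto
    then show ?thesis using ih unfolding R_def[symmetric] Rz by simp
  qed
qed

end


theorem lemma2p1:
  fixes A B C :: complex and n c :: nat and a b :: real and S :: "real set"
  assumes "\<not> collinear {A, B, C}"
    and "c \<ge> 1"
    and "is_interval_of A B C n a b"
    and "S = cut_pts A B C (n + c) \<inter> {a<..<b}"
    and "card S \<ge> 4 + 2 * c"
  shows "\<exists>xp\<in>S. \<exists>xq\<in>S. \<exists>xr\<in>S. \<exists>p q r. good_position A B C xp xq xr p q r"
proof (rule ccontr)
  assume ng: "\<not> ?thesis"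
  have D0: "cross (B - A) (C - A) \<noteq> 0" using assms(1) cross_zero_collinear by blast
  note J = assms(3) and Sd = assms(4)
  have fin: "finite S" using assms(5) by (metis card.infinite not_numeral_le_zero add_is_0 le_zero_eq zero_neq_numeral)
  have ne: "S \<noteq> {}" using assms(5) by auto
  define M where "M = Min (lev A B C ` S)"
  have "M \<in> lev A B C ` S" unfolding M_def using fin ne by (intro Min_in) auto
  then obtain x1 where x1: "x1 \<in> S" "lev A B C x1 = M" by force
  have xmin: "\<And>y. y \<in> S \<Longrightarrow> lev A B C x1 \<le> lev A B C y" using Min_le fin unfolding x1(2) M_def by auto
  have strict: "lev A B C x1 < lev A B C t" if t: "t \<in> S" "t \<noteq> x1" for t
  proof (rule ccontr)
    assume "\<not> ?thesis"
    then have eq: "lev A B C t = lev A B C x1" using xmin[OF t(1)] by simp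
    show False
    proof (cases "t < x1")
      case True
      obtain w where "w \<in> S" "lev A B C w < lev A B C t" using between[OF D0 J Sd t(1) x1(1) True eq] by blast
      then show False using xmin eq by fastforce
    next
      case False then have "x1 < t" using t(2) by simp
      obtain w where "w \<in> S" "lev A B C w < lev A B C x1" using between[OF D0 J Sd x1(1) t(1) \<open>x1 < t\<close>] eq by auto
      then show False using xmin by fastforce
    qed
  qed
  have injR: "inj_on (lev A B C) (S \<inter> {x1<..})"
    using chain_right[OF D0 J Sd fin ng x1(1)] strict by auto
  have injL: "inj_on (lev A B C) (S \<inter> {..<x1})"
    using chain_left[OF D0 J Sd fin ng x1(1)] strict by auto
  have rng: "lev A B C ` T \<subseteq> {n<..n + c}" if "T \<subseteq> S" for T
    using levS(2,3)[OF D0 J Sd] that by auto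
  have cR: "card (S \<inter> {x1<..}) \<le> c"
  proof -
    have "card (S \<inter> {x1<..}) = card (lev A B C ` (S \<inter> {x1<..}))" using card_image[OF injR] by simp
    also have "\<dots> \<le> card {n<..n + c}" by (rule card_mono) (use rng in auto)
    finally show ?thesis by simp
  qed
  have cL: "card (S \<inter> {..<x1}) \<le> c"
  proof -
    have "card (S \<inter> {..<x1}) = card (lev A B C ` (S \<inter> {..<x1}))" using card_image[OF injL] by simp
    also have "\<dots> \<le> card {n<..n + c}" by (rule card_mono) (use rng in auto)
    finally show ?thesis by simp
  qed
  have "S \<subseteq> (S \<inter> {..<x1}) \<union> ({x1} \<union> (S \<inter> {x1<..}))" by auto
  then have "card S \<le> card ((S \<inter> {..<x1}) \<union> ({x1} \<union> (S \<inter> {x1<..})))"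
    by (rule card_mono[rotated]) (use fin in auto)
  also have "\<dots> \<le> card (S \<inter> {..<x1}) + (card {x1} + card (S \<inter> {x1<..}))"
    by (meson card_Un_le add_left_mono order_trans)
  finally have "card S \<le> c + 1 + c" using cR cL by simp
  then show False using assms(5) by simp
qed

end
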